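(* Let $(A,B)$ be an $n\times n$ definite pencil and let $\epsilon>0$. If $A',B'\in\mathbb{C}^{n\times n}$ satisfy $\|A-A'\|_2,\|B-B'\|_2\le\eta<\frac{\epsilon}{\sqrt2}$ with $A-A'$ and $B-B'$ Hermitian, then $$\Lambda^{\mathrm{sym}}_{\epsilon-\sqrt2\eta}(A',B')\subseteq\Lambda^{\mathrm{sym}}_\epsilon(A,B).$$
   Context: A pencil $(A,B)$ of $n\times n$ complex matrices is definite if $A,B$ are Hermitian and $\gamma(A,B)=\min_{\|x\|_2=1}|x^H(A+iB)x|>0$. For a pencil $(A,B)$ with $A,B$ Hermitian and $\delta>0$, $\Lambda^{\mathrm{sym}}_\delta(A,B)=\{z\in\mathbb{C}:(A+E)u=z(B+F)u$ for some $u\ne0$ and Hermitian $E,F$ with $\sqrt{\|E\|_2^2+\|F\|_2^2}\le\delta\}$. *)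

theory Defs
  imports "HOL-Analysis.Analysis"
begin

text \<open>n x n complex matrices are modelled as complex^'n^'n (index type 'n finite);
  vectors of C^n as complex^'n with the Euclidean norm.\<close>

definition conj_transpose :: "complex^'n^'m \<Rightarrow> complex^'m^'n" where
  "conj_transpose M = (\<chi> i j. cnj (M $ j $ i))"

definition hermitian :: "complex^'n^'n \<Rightarrow> bool" where
  "hermitian M \<longleftrightarrow> conj_transpose M = M"

definition spec_norm :: "complex^'n^'m \<Rightarrow> real" where
  "spec_norm M = onorm (\<lambda>x::complex^'n. M *v x)"

definition cinner :: "complex^'n \<Rightarrow> complex^'n \<Rightarrow> complex" where
  "cinner x y = (\<Sum>i\<in>UNIV. cnj (x $ i) * y $ i)"

definition crawford :: "complex^'n^'n \<Rightarrow> complex^'n^'n \<Rightarrow> real" where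
  "crawford A B = Inf {cmod (cinner x ((A + (\<chi> i j. \<i> * B $ i $ j)) *v x)) | x. norm x = 1}"

definition definite_pencil :: "complex^'n^'n \<Rightarrow> complex^'n^'n \<Rightarrow> bool" where
  "definite_pencil A B \<longleftrightarrow> hermitian A \<and> hermitian B \<and> crawford A B > 0"

definition sym_pseudospectrum :: "real \<Rightarrow> complex^'n^'n \<Rightarrow> complex^'n^'n \<Rightarrow> complex set" where
  "sym_pseudospectrum \<delta> A B = {z. \<exists>u E F. u \<noteq> 0 \<and> hermitian E \<and> hermitian F \<and>
      sqrt ((spec_norm E)\<^sup>2 + (spec_norm F)\<^sup>2) \<le> \<delta> \<and>
      (A + E) *v u = z *s ((B + F) *v u)}"

end

theory Submission
  imports Defs
begin

lemma herm_iff: "hermitian M \<longleftrightarrow> (\<forall>i j. cnj (M $ j $ i) = M $ i $ j)"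
  unfolding hermitian_def conj_transpose_def by (simp add: vec_eq_iff)

lemma herm_add: "hermitian M \<Longrightarrow> hermitian N \<Longrightarrow> hermitian (M + N)"
  unfolding herm_iff by simp

lemma herm_neg: "hermitian M \<Longrightarrow> hermitian (- M)"
  unfolding herm_iff by simp

lemma spec_tri: "spec_norm ((M::complex^'n^'m) + N) \<le> spec_norm M + spec_norm N"
proof -
  have "(\<lambda>x::complex^'n. (M + N) *v x) = (\<lambda>x. M *v x + N *v x)"
    by (simp add: matrix_vector_mult_add_rdistrib)
  then show ?thesis unfolding spec_norm_def
    using onorm_triangle[OF matrix_vector_mul_bounded_linear matrix_vector_mul_bounded_linear] by simp
qed

lemma spec_neg: "spec_norm (- (M::complex^'n^'m)) = spec_norm M"
proof -
  have "(\<lambda>x::complex^'n. (- M) *v x) = (\<lambda>x. - (M *v x))"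
    by (rule ext) (simp add: matrix_vector_mult_def vec_eq_iff sum_negf)
  then show ?thesis unfolding spec_norm_def using onorm_neg by simp
qed

lemma spec_nonneg: "spec_norm (M::complex^'n^'m) \<ge> 0"
  unfolding spec_norm_def by (rule onorm_pos_le) simp

theorem lemma3p10:
  fixes A B A' B' :: "complex^'n^'n" and \<epsilon> \<eta> :: real
  assumes "definite_pencil A B"
    and "\<epsilon> > 0"
    and "hermitian (A - A')" and "hermitian (B - B')"
    and "spec_norm (A - A') \<le> \<eta>" and "spec_norm (B - B') \<le> \<eta>"
    and "\<eta> < \<epsilon> / sqrt 2"
  shows "sym_pseudospectrum (\<epsilon> - sqrt 2 * \<eta>) A' B' \<subseteq> sym_pseudospectrum \<epsilon> A B"
proof
  fix z assume "z \<in> sym_pseudospectrum (\<epsilon> - sqrt 2 * \<eta>) A' B'"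
  then obtain u E F where u: "u \<noteq> 0" and hE: "hermitian E" and hF: "hermitian F"
    and nr: "sqrt ((spec_norm E)\<^sup>2 + (spec_norm F)\<^sup>2) \<le> \<epsilon> - sqrt 2 * \<eta>"
    and eq: "(A' + E) *v u = z *s ((B' + F) *v u)"
    unfolding sym_pseudospectrum_def by blast
  define E' where "E' = - (A - A') + E"
  define F' where "F' = - (B - B') + F"
  have A1: "A' + E = A + E'" "B' + F = B + F'" unfolding E'_def F'_def by (simp_all add: algebra_simps)
  have hE': "hermitian E'" "hermitian F'" unfolding E'_def F'_def
    using herm_add herm_neg assms(3,4) hE hF by blast+
  have e1: "spec_norm E' \<le> \<eta> + spec_norm E" unfolding E'_def
    using spec_tri[of "- (A - A')" E] spec_neg[of "A - A'"] assms(5) by linarith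
  have f1: "spec_norm F' \<le> \<eta> + spec_norm F" unfolding F'_def
    using spec_tri[of "- (B - B')" F] spec_neg[of "B - B'"] assms(6) by linarith
  have "\<eta> \<ge> 0" using spec_nonneg[of "A - A'"] assms(5) by linarith
  have "sqrt ((spec_norm E')\<^sup>2 + (spec_norm F')\<^sup>2) \<le> sqrt ((\<eta> + spec_norm E)\<^sup>2 + (\<eta> + spec_norm F)\<^sup>2)"
    using e1 f1 spec_nonneg[of E'] spec_nonneg[of F']
    by (intro real_sqrt_le_mono add_mono power_mono) auto
  also have "\<dots> \<le> sqrt (\<eta>\<^sup>2 + \<eta>\<^sup>2) + sqrt ((spec_norm E)\<^sup>2 + (spec_norm F)\<^sup>2)"
    by (rule real_sqrt_sum_squares_triangle_ineq)
  also have "sqrt (\<eta>\<^sup>2 + \<eta>\<^sup>2) = sqrt 2 * \<eta>"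
    using \<open>\<eta> \<ge> 0\<close> by (simp add: real_sqrt_mult)
  finally have "sqrt ((spec_norm E')\<^sup>2 + (spec_norm F')\<^sup>2) \<le> \<epsilon>" using nr by linarith
  then show "z \<in> sym_pseudospectrum \<epsilon> A B"
    unfolding sym_pseudospectrum_def using u hE' eq A1 by auto
qed

end
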